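(* Let $\mathbf{k}$ and $\mathbf{l}$ be indices. If at least one of $\mathbf{k}$ and $\mathbf{l}$ is admissible, then $E_{\mathbf{k}} \,\mathrm{sh}_{\hbar}\, E_{\mathbf{l}}$ belongs to $\mathfrak{e}$. If both $\mathbf{k}$ and $\mathbf{l}$ are admissible, then $E_{\mathbf{k}} \,\mathrm{sh}_{\hbar}\, E_{\mathbf{l}}$ belongs to $\mathfrak{e}^{0}$.
   Context: Indices: an index is a finite (possibly empty) tuple $\mathbf k=(k_1,\dots,k_r)$ of positive integers; admissible if empty or $k_r\ge2$; $I$ = set of indices, $I_0$ = set of admissible indices. Let $\mathcal{C}=\mathbb{Q}[\hbar]$ ($\hbar$ formal), $\mathfrak{H}=\mathcal{C}\langle a,b\rangle$ the non-commutative polynomial ring. For $k\ge1$, $g_k=ba^k$, $e_k=b(a+\hbar)a^{k-1}$. Shuffle product $\mathrm{sh}_\hbar$ on $\mathfrak H$: $\mathcal C$-bilinear with $w\,\mathrm{sh}_\hbar\,1=1\,\mathrm{sh}_\hbar\,w=w$, $wa\,\mathrm{sh}_\hbar\,w'a=(wa\,\mathrm{sh}_\hbar\,w'+w\,\mathrm{sh}_\hbar\,w'a+\hbar(w\,\mathrm{sh}_\hbar\,w'))a$, $wb\,\mathrm{sh}_\hbar\,w'=w\,\mathrm{sh}_\hbar\,w'b=(w\,\mathrm{sh}_\hbar\,w')b$. For $m\ge0$, $E_{1^m}=\frac1{(m+1)!}\sum_{j=0}^m g_1^{\mathrm{sh}_\hbar j}\,\mathrm{sh}_\hbar\,e_1^{\mathrm{sh}_\hbar(m-j)}$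 (shuffle powers, $u^{\mathrm{sh}_\hbar 0}=1$). Each non-empty index is uniquely $\mathbf k=(1^{s_0},t_1+2,1^{s_1},\dots,t_r+2,1^{s_r})$ with $r,s_i,t_i\ge0$ ($1^s$ = $s$ consecutive ones); $E_{\mathbf k}=E_{1^{s_0}}e_{t_1+2}E_{1^{s_1}}\cdots e_{t_r+2}E_{1^{s_r}}$, $E_\varnothing=1$. $\mathfrak e=\bigoplus_{\mathbf k\in I}\mathcal C E_{\mathbf k}$ and $\mathfrak e^0=\sum_{\mathbf k\in I_0}\mathcal C E_{\mathbf k}$. *)

theory Defs
  imports "HOL-Library.Poly_Mapping" "HOL-Computational_Algebra.Polynomial"
begin

type_synonym coef = "rat poly"

definition hbar :: coef where "hbar = [:0, 1:]"

text \<open>Letters a, b; words are lists of letters; elements of the non-commutative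
  polynomial ring H = C<a,b> are finitely supported functions words => C.\<close>
datatype letter = A | B

type_synonym nc = "letter list \<Rightarrow>\<^sub>0 coef"

definition word :: "letter list \<Rightarrow> nc" where
  "word w = Poly_Mapping.single w 1"

definition nc_one :: nc where "nc_one = word []"

definition scal :: "coef \<Rightarrow> nc \<Rightarrow> nc" where
  "scal c p = (\<Sum>u\<in>Poly_Mapping.keys p. Poly_Mapping.single u (c * Poly_Mapping.lookup p u))"

definition ncmult :: "nc \<Rightarrow> nc \<Rightarrow> nc" where
  "ncmult p q = (\<Sum>u\<in>Poly_Mapping.keys p. \<Sum>v\<in>Poly_Mapping.keys q. Poly_Mapping.single (u @ v) (Poly_Mapping.lookup p u * Poly_Mapping.lookup q v))"

definition rmul :: "nc \<Rightarrow> letter \<Rightarrow> nc" where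
  "rmul p x = ncmult p (word [x])"

function shw :: "letter list \<Rightarrow> letter list \<Rightarrow> nc" where
  "shw u v =
    (if u = [] then word v
     else if v = [] then word u
     else if last u = B then rmul (shw (butlast u) v) B
     else if last v = B then rmul (shw u (butlast v)) B
     else rmul (shw u (butlast v) + shw (butlast u) v
                + scal hbar (shw (butlast u) (butlast v))) A)"
  by pat_completeness auto
termination
  by (relation "measure (\<lambda>(u, v). length u + length v)") (auto simp: Suc_le_eq)

definition sh :: "nc \<Rightarrow> nc \<Rightarrow> nc" where
  "sh p q = (\<Sum>u\<in>Poly_Mapping.keys p. \<Sum>v\<in>Poly_Mapping.keys q. scal (Poly_Mapping.lookup p u * Poly_Mapping.lookup q v) (shw u v))"

fun shpow :: "nc \<Rightarrow> nat \<Rightarrow> nc" where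
  "shpow p 0 = nc_one"
| "shpow p (Suc n) = sh p (shpow p n)"

definition g :: "nat \<Rightarrow> nc" where
  "g k = word (B # replicate k A)"

definition e :: "nat \<Rightarrow> nc" where
  "e k = ncmult (word [B]) (ncmult (word [A] + scal hbar nc_one) (word (replicate (k - 1) A)))"

definition E1 :: "nat \<Rightarrow> nc" where
  "E1 m = scal [: 1 / of_nat (fact (m + 1)) :]
            (\<Sum>j\<le>m. sh (shpow (g 1) j) (shpow (e 1) (m - j)))"

text \<open>E_k for an index k = (1^{s0}, t1+2, 1^{s1}, ..., tr+2, 1^{sr});
  the first argument of Eaux counts the current run of ones.\<close>
fun Eaux :: "nat \<Rightarrow> nat list \<Rightarrow> nc" where
  "Eaux s [] = E1 s"
| "Eaux s (k # ks) = (if k = 1 then Eaux (Suc s) ks else ncmult (ncmult (E1 s) (e k)) (Eaux 0 ks))"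

definition Eidx :: "nat list \<Rightarrow> nc" where
  "Eidx ks = Eaux 0 ks"

definition is_index :: "nat list \<Rightarrow> bool" where
  "is_index ks \<longleftrightarrow> (\<forall>k\<in>set ks. 0 < k)"

definition admissible :: "nat list \<Rightarrow> bool" where
  "admissible ks \<longleftrightarrow> is_index ks \<and> (ks = [] \<or> 2 \<le> last ks)"

definition E_span :: "nat list set \<Rightarrow> nc set" where
  "E_span S = {x. \<exists>F c. finite F \<and> F \<subseteq> S \<and> x = (\<Sum>k\<in>F. scal (c k) (Eidx k))}"

definition frak_e :: "nc set" where "frak_e = E_span {ks. is_index ks}"
definition frak_e0 :: "nc set" where "frak_e0 = E_span {ks. admissible ks}"

end

theory Submission
  imports Defs
begin


lemma lookup_scal [simp]: "Poly_Mapping.lookup (scal c p) w = c * Poly_Mapping.lookup p w"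
proof -
  have "Poly_Mapping.lookup (scal c p) w =
        (\<Sum>u\<in>Poly_Mapping.keys p. (if u = w then c * Poly_Mapping.lookup p u else 0))"
    unfolding scal_def lookup_sum lookup_single by (intro sum.cong) (auto simp: when_def)
  also have "\<dots> = c * Poly_Mapping.lookup p w"
    by (simp add: in_keys_iff)
  finally show ?thesis .
qed

lemma scal_add_right: "scal c (p + q) = scal c p + scal c q"
  by (rule poly_mapping_eqI) (simp add: lookup_add algebra_simps)
lemma scal_add_left: "scal (c + d) p = scal c p + scal d p"
  by (rule poly_mapping_eqI) (simp add: lookup_add algebra_simps)
lemma scal_scal: "scal c (scal d p) = scal (c * d) p"
  by (rule poly_mapping_eqI) (simp add: algebra_simps)
lemma scal_zero_left [simp]: "scal 0 p = 0"
  by (rule poly_mapping_eqI) simp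
lemma scal_zero_right [simp]: "scal c 0 = 0"
  by (rule poly_mapping_eqI) simp
lemma scal_one [simp]: "scal 1 p = p"
  by (rule poly_mapping_eqI) simp
lemma scal_minus_right: "scal c (p - q) = scal c p - scal c q"
  by (rule poly_mapping_eqI) (simp add: lookup_minus algebra_simps)
lemma scal_uminus_right: "scal c (- p) = - scal c p"
  by (rule poly_mapping_eqI) (simp add: algebra_simps)
lemma scal_minus_left: "scal (c - d) p = scal c p - scal d p"
  by (rule poly_mapping_eqI) (simp add: lookup_minus algebra_simps)
lemma scal_sum_right: "scal c (sum f S) = (\<Sum>x\<in>S. scal c (f x))"
  by (induction S rule: infinite_finite_induct) (auto simp: scal_add_right)
lemma scal_sum_left: "scal (sum f S) p = (\<Sum>x\<in>S. scal (f x) p)"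
  by (induction S rule: infinite_finite_induct) (auto simp: scal_add_left)
lemma scal_word: "scal c (word u) = Poly_Mapping.single u c"
  by (rule poly_mapping_eqI) (simp add: word_def lookup_single when_def)

lemma scal_single: "scal c (Poly_Mapping.single w d) = Poly_Mapping.single w (c * d)"
  by (rule poly_mapping_eqI) (simp add: lookup_single when_def)

definition lin :: "(letter list \<Rightarrow> nc) \<Rightarrow> nc \<Rightarrow> nc" where
  "lin f p = (\<Sum>u\<in>Poly_Mapping.keys p. scal (Poly_Mapping.lookup p u) (f u))"

lemma lin_superset:
  assumes "finite S" "Poly_Mapping.keys p \<subseteq> S"
  shows "lin f p = (\<Sum>u\<in>S. scal (Poly_Mapping.lookup p u) (f u))"
  unfolding lin_def
  by (rule sum.mono_neutral_left) (use assms in \<open>auto simp: in_keys_iff\<close>)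

lemma lin_add: "lin f (p + q) = lin f p + lin f q"
proof -
  let ?S = "Poly_Mapping.keys p \<union> Poly_Mapping.keys q"
  have "lin f (p + q) = (\<Sum>u\<in>?S. scal (Poly_Mapping.lookup (p + q) u) (f u))"
    by (rule lin_superset) (auto simp: keys_add)
  also have "\<dots> = (\<Sum>u\<in>?S. scal (Poly_Mapping.lookup p u) (f u)) + (\<Sum>u\<in>?S. scal (Poly_Mapping.lookup q u) (f u))"
    by (simp add: lookup_add scal_add_left sum.distrib)
  also have "\<dots> = lin f p + lin f q"
    by (simp add: lin_superset[symmetric])
  finally show ?thesis .
qed

lemma lin_scal: "lin f (scal c p) = scal c (lin f p)"
proof -
  have "lin f (scal c p) = (\<Sum>u\<in>Poly_Mapping.keys p. scal (Poly_Mapping.lookup (scal c p) u) (f u))"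
    by (rule lin_superset) (auto simp: in_keys_iff)
  also have "\<dots> = scal c (lin f p)"
    by (simp add: lin_def scal_sum_right scal_scal)
  finally show ?thesis .
qed

lemma lin_zero [simp]: "lin f 0 = 0"
  by (simp add: lin_def)

lemma lin_word [simp]: "lin f (word u) = f u"
  by (simp add: lin_def word_def)

lemma lin_single: "lin f (Poly_Mapping.single u c) = scal c (f u)"
  by (metis lin_scal lin_word scal_word)

lemma lin_cong: "(\<And>u. u \<in> Poly_Mapping.keys p \<Longrightarrow> f u = h u) \<Longrightarrow> lin f p = lin h p"
  by (simp add: lin_def)

lemma lin_fun_add: fixes f h :: "letter list \<Rightarrow> nc" shows "lin (\<lambda>u. f u + h u) p = lin f p + lin h p"
  by (simp add: lin_def scal_add_right sum.distrib)

lemma lin_fun_scal: fixes f :: "letter list \<Rightarrow> nc" shows "lin (\<lambda>u. scal c (f u)) p = scal c (lin f p)"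
  by (simp add: lin_def scal_scal scal_sum_right mult.commute)

lemma lin_fun_zero [simp]: "lin (\<lambda>u. 0) p = 0"
  by (simp add: lin_def)

lemma lin_fun_sum: fixes f :: "'a \<Rightarrow> letter list \<Rightarrow> nc" shows "lin (\<lambda>u. \<Sum>i\<in>I. f i u) p = (\<Sum>i\<in>I. lin (f i) p)"
  unfolding lin_def scal_sum_right by (rule sum.swap)

lemma lin_expansion [simp]: "lin word p = p"
proof (rule poly_mapping_eqI)
  fix w
  have "Poly_Mapping.lookup (lin word p) w =
     (\<Sum>u\<in>Poly_Mapping.keys p. (if u = w then Poly_Mapping.lookup p u else 0))"
    unfolding lin_def lookup_sum by (intro sum.cong) (auto simp: word_def lookup_single when_def)
  also have "\<dots> = Poly_Mapping.lookup p w" by (simp add: in_keys_iff)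
  finally show "Poly_Mapping.lookup (lin word p) w = Poly_Mapping.lookup p w" .
qed

definition linear_nc :: "(nc \<Rightarrow> nc) \<Rightarrow> bool" where
  "linear_nc L \<longleftrightarrow> (\<forall>p q. L (p + q) = L p + L q) \<and> (\<forall>c p. L (scal c p) = scal c (L p))"

lemma linear_ncI: "(\<And>p q. L (p + q) = L p + L q) \<Longrightarrow> (\<And>c p. L (scal c p) = scal c (L p)) \<Longrightarrow> linear_nc L"
  by (simp add: linear_nc_def)

lemma linear_nc_add: "linear_nc L \<Longrightarrow> L (p + q) = L p + L q"
  by (simp add: linear_nc_def)
lemma linear_nc_scal: "linear_nc L \<Longrightarrow> L (scal c p) = scal c (L p)"
  by (simp add: linear_nc_def)
lemma linear_nc_zero: "linear_nc L \<Longrightarrow> L 0 = 0"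
  by (metis linear_nc_scal scal_zero_left)
lemma linear_nc_uminus: "linear_nc L \<Longrightarrow> L (- p) = - L p"
  by (metis add.inverse_unique add.right_inverse linear_nc_add linear_nc_zero)
lemma linear_nc_diff: "linear_nc L \<Longrightarrow> L (p - q) = L p - L q"
  by (metis diff_conv_add_uminus linear_nc_add linear_nc_uminus)
lemma linear_nc_sum: "linear_nc L \<Longrightarrow> L (sum f S) = (\<Sum>x\<in>S. L (f x))"
  by (induction S rule: infinite_finite_induct) (auto simp: linear_nc_zero linear_nc_add)

lemma linear_nc_lin_eq: assumes "linear_nc L" shows "L p = lin (\<lambda>u. L (word u)) p"
proof -
  have "L p = L (lin word p)" by simp
  also have "\<dots> = lin (\<lambda>u. L (word u)) p"
    unfolding lin_def by (simp add: linear_nc_sum[OF assms] linear_nc_scal[OF assms])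
  finally show ?thesis .
qed

lemma linear_nc_ext:
  assumes "linear_nc L" "linear_nc M" "\<And>u. L (word u) = M (word u)"
  shows "L p = M p"
proof -
  have "L p = lin (\<lambda>u. L (word u)) p" by (rule linear_nc_lin_eq[OF assms(1)])
  also have "\<dots> = lin (\<lambda>u. M (word u)) p" by (simp only: assms(3))
  also have "\<dots> = M p" by (rule linear_nc_lin_eq[OF assms(2), symmetric])
  finally show ?thesis .
qed

lemma linear_nc_lin [simp]: "linear_nc (lin f)"
  by (simp add: linear_nc_def lin_add lin_scal)
lemma linear_nc_id [simp]: "linear_nc (\<lambda>p. p)"
  by (simp add: linear_nc_def)
lemma linear_nc_const0 [simp]: "linear_nc (\<lambda>p. 0)"
  by (simp add: linear_nc_def)
lemma linear_nc_comp: "linear_nc L \<Longrightarrow> linear_nc M \<Longrightarrow> linear_nc (\<lambda>p. L (M p))"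
  by (simp add: linear_nc_def)
lemma linear_nc_plus: "linear_nc L \<Longrightarrow> linear_nc M \<Longrightarrow> linear_nc (\<lambda>p. L p + M p)"
  by (simp add: linear_nc_def scal_add_right algebra_simps)
lemma linear_nc_minus: "linear_nc L \<Longrightarrow> linear_nc M \<Longrightarrow> linear_nc (\<lambda>p. L p - M p)"
  by (simp add: linear_nc_def scal_minus_right algebra_simps)
lemma linear_nc_scalc: "linear_nc L \<Longrightarrow> linear_nc (\<lambda>p. scal c (L p))"
  by (simp add: linear_nc_def scal_add_right scal_scal mult.commute)
lemma linear_nc_scal_fun [simp]: "linear_nc (scal c)"
  by (simp add: linear_nc_def scal_add_right scal_scal mult.commute)

lemma lin_linear_nc: "linear_nc L \<Longrightarrow> L (lin f p) = lin (\<lambda>u. L (f u)) p"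
  by (simp add: lin_def linear_nc_sum linear_nc_scal)

definition bil :: "(letter list \<Rightarrow> letter list \<Rightarrow> nc) \<Rightarrow> nc \<Rightarrow> nc \<Rightarrow> nc" where
  "bil f p q = lin (\<lambda>u. lin (f u) q) p"

lemma bil_linear_left [simp]: "linear_nc (\<lambda>p. bil f p q)"
  by (simp add: bil_def)
lemma bil_linear_right [simp]: "linear_nc (\<lambda>q. bil f p q)"
  by (rule linear_ncI) (simp_all add: bil_def lin_add lin_scal lin_fun_add lin_fun_scal)
lemma bil_word_left [simp]: "bil f (word u) q = lin (f u) q"
  by (simp add: bil_def)
lemma bil_word_right [simp]: "bil f p (word v) = lin (\<lambda>u. f u v) p"
  by (simp add: bil_def)

lemma ncmult_bil: "ncmult p q = bil (\<lambda>u v. word (u @ v)) p q"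
  unfolding ncmult_def bil_def lin_def
  by (simp add: scal_sum_right scal_scal scal_word scal_single)

lemma sh_bil: "sh p q = bil shw p q"
  unfolding sh_def bil_def lin_def
  by (simp add: scal_sum_right scal_scal)



declare shw.simps[simp del]

lemma nc_ext2:
  assumes "\<And>q. linear_nc (\<lambda>p. L p q)" "\<And>q. linear_nc (\<lambda>p. M p q)"
    "\<And>p. linear_nc (\<lambda>q. L p q)" "\<And>p. linear_nc (\<lambda>q. M p q)"
    "\<And>u v. L (word u) (word v) = M (word u) (word v)"
  shows "L p q = M p q"
proof -
  have "L (word u) q = M (word u) q" for u
    by (rule linear_nc_ext[OF assms(3) assms(4)]) (simp add: assms(5))
  then show ?thesis by (rule linear_nc_ext[OF assms(1) assms(2)])
qed

lemma linear_sh_left [intro]: "linear_nc L \<Longrightarrow> linear_nc (\<lambda>p. sh (L p) q)"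
  unfolding sh_bil by (rule linear_nc_comp[OF bil_linear_left])
lemma linear_sh_right [intro]: "linear_nc L \<Longrightarrow> linear_nc (\<lambda>p. sh q (L p))"
  unfolding sh_bil by (rule linear_nc_comp[OF bil_linear_right])
lemma linear_ncmult_left [intro]: "linear_nc L \<Longrightarrow> linear_nc (\<lambda>p. ncmult (L p) q)"
  unfolding ncmult_bil by (rule linear_nc_comp[OF bil_linear_left])
lemma linear_ncmult_right [intro]: "linear_nc L \<Longrightarrow> linear_nc (\<lambda>p. ncmult q (L p))"
  unfolding ncmult_bil by (rule linear_nc_comp[OF bil_linear_right])
lemma linear_rmul [intro]: "linear_nc L \<Longrightarrow> linear_nc (\<lambda>p. rmul (L p) x)"
  unfolding rmul_def by (rule linear_ncmult_left)
lemma linear_plus [intro]: "linear_nc L \<Longrightarrow> linear_nc M \<Longrightarrow> linear_nc (\<lambda>p. L p + M p)"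
  by (rule linear_nc_plus)
lemma linear_minus [intro]: "linear_nc L \<Longrightarrow> linear_nc M \<Longrightarrow> linear_nc (\<lambda>p. L p - M p)"
  by (rule linear_nc_minus)
lemma linear_scal [intro]: "linear_nc L \<Longrightarrow> linear_nc (\<lambda>p. scal c (L p))"
  by (rule linear_nc_scalc)
lemma linear_lin [intro]: "linear_nc L \<Longrightarrow> linear_nc (\<lambda>p. lin f (L p))"
  by (rule linear_nc_comp[OF linear_nc_lin])
lemmas linear_id [intro] = linear_nc_id
lemmas linear_intros = linear_sh_left linear_sh_right linear_ncmult_left linear_ncmult_right
  linear_rmul linear_plus linear_minus linear_scal linear_lin linear_nc_id

lemma sh_add_left: "sh (p + q) r = sh p r + sh q r"
  by (rule linear_nc_add[OF linear_sh_left[OF linear_id]])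
lemma sh_add_right: "sh r (p + q) = sh r p + sh r q"
  by (rule linear_nc_add[OF linear_sh_right[OF linear_id]])
lemma sh_scal_left: "sh (scal c p) r = scal c (sh p r)"
  by (rule linear_nc_scal[OF linear_sh_left[OF linear_id]])
lemma sh_scal_right: "sh r (scal c p) = scal c (sh r p)"
  by (rule linear_nc_scal[OF linear_sh_right[OF linear_id]])
lemma sh_diff_left: "sh (p - q) r = sh p r - sh q r"
  by (rule linear_nc_diff[OF linear_sh_left[OF linear_id]])
lemma sh_diff_right: "sh r (p - q) = sh r p - sh r q"
  by (rule linear_nc_diff[OF linear_sh_right[OF linear_id]])
lemma sh_zero_left [simp]: "sh 0 r = 0"
  by (rule linear_nc_zero[OF linear_sh_left[OF linear_id]])
lemma sh_zero_right [simp]: "sh r 0 = 0"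
  by (rule linear_nc_zero[OF linear_sh_right[OF linear_id]])
lemma sh_sum_left: "sh (sum f S) r = (\<Sum>x\<in>S. sh (f x) r)"
  by (rule linear_nc_sum[OF linear_sh_left[OF linear_id]])
lemma sh_sum_right: "sh r (sum f S) = (\<Sum>x\<in>S. sh r (f x))"
  by (rule linear_nc_sum[OF linear_sh_right[OF linear_id]])

lemma rmul_add: "rmul (p + q) x = rmul p x + rmul q x"
  by (rule linear_nc_add[OF linear_rmul[OF linear_id]])
lemma rmul_scal: "rmul (scal c p) x = scal c (rmul p x)"
  by (rule linear_nc_scal[OF linear_rmul[OF linear_id]])
lemma rmul_diff: "rmul (p - q) x = rmul p x - rmul q x"
  by (rule linear_nc_diff[OF linear_rmul[OF linear_id]])
lemma rmul_zero [simp]: "rmul 0 x = 0"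
  by (rule linear_nc_zero[OF linear_rmul[OF linear_id]])
lemma rmul_sum: "rmul (sum f S) x = (\<Sum>i\<in>S. rmul (f i) x)"
  by (rule linear_nc_sum[OF linear_rmul[OF linear_id]])

lemma ncmult_add_left: "ncmult (p + q) r = ncmult p r + ncmult q r"
  by (rule linear_nc_add[OF linear_ncmult_left[OF linear_id]])
lemma ncmult_add_right: "ncmult r (p + q) = ncmult r p + ncmult r q"
  by (rule linear_nc_add[OF linear_ncmult_right[OF linear_id]])
lemma ncmult_scal_left: "ncmult (scal c p) r = scal c (ncmult p r)"
  by (rule linear_nc_scal[OF linear_ncmult_left[OF linear_id]])
lemma ncmult_scal_right: "ncmult r (scal c p) = scal c (ncmult r p)"
  by (rule linear_nc_scal[OF linear_ncmult_right[OF linear_id]])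
lemma ncmult_sum_right: "ncmult r (sum f S) = (\<Sum>i\<in>S. ncmult r (f i))"
  by (rule linear_nc_sum[OF linear_ncmult_right[OF linear_id]])
lemma ncmult_sum_left: "ncmult (sum f S) r = (\<Sum>i\<in>S. ncmult (f i) r)"
  by (rule linear_nc_sum[OF linear_ncmult_left[OF linear_id]])

lemma ncmult_word [simp]: "ncmult (word u) (word v) = word (u @ v)"
  by (simp add: ncmult_bil)
lemma rmul_word [simp]: "rmul (word u) x = word (u @ [x])"
  by (simp add: rmul_def)
lemma sh_word [simp]: "sh (word u) (word v) = shw u v"
  by (simp add: sh_bil)

lemma ncmult_assoc: "ncmult (ncmult p q) r = ncmult p (ncmult q r)"
proof -
  have *: "ncmult (ncmult (word u) q) r = ncmult (word u) (ncmult q r)" for u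
    by (rule nc_ext2[where L="\<lambda>q r. ncmult (ncmult (word u) q) r" and M="\<lambda>q r. ncmult (word u) (ncmult q r)"]; (intro linear_intros)?; simp)
  show ?thesis
    by (rule linear_nc_ext[where L="\<lambda>p. ncmult (ncmult p q) r" and M="\<lambda>p. ncmult p (ncmult q r)"]; (intro linear_intros)?; simp only: *)
qed

lemma ncmult_one_right [simp]: "ncmult p nc_one = p"
  by (rule linear_nc_ext[where L="\<lambda>p. ncmult p nc_one" and M="\<lambda>p. p"]) (auto simp: nc_one_def)
lemma ncmult_one_left [simp]: "ncmult nc_one p = p"
  by (rule linear_nc_ext[where L="\<lambda>p. ncmult nc_one p" and M="\<lambda>p. p"]) (auto simp: nc_one_def)

lemma rmul_ncmult: "rmul (ncmult p q) x = ncmult p (rmul q x)"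
  by (simp add: rmul_def ncmult_assoc)

lemma shw_Nil_left [simp]: "shw [] v = word v"
  by (subst shw.simps) simp
lemma shw_Nil_right [simp]: "shw u [] = word u"
  by (subst shw.simps) simp

lemma shw_snocB_left: "shw (u @ [B]) v = rmul (shw u v) B"
  by (cases "v = []") (subst shw.simps, simp)+

lemma shw_snocB_right: "shw u (v @ [B]) = rmul (shw u v) B"
proof (induction u rule: rev_induct)
  case Nil then show ?case by simp
next
  case (snoc x u)
  show ?case
  proof (cases x)
    case A
    then show ?thesis by (subst shw.simps) simp
  next
    case B
    then show ?thesis using snoc by (simp add: shw_snocB_left)
  qed
qed

lemma shw_AA: "shw (u @ [A]) (v @ [A]) = rmul (shw (u @ [A]) v + shw u (v @ [A]) + scal hbar (shw u v)) A"
  by (subst shw.simps) simp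

lemma sh_one_left [simp]: "sh nc_one q = q"
  by (rule linear_nc_ext[where L="\<lambda>q. sh nc_one q" and M="\<lambda>q. q"]) (auto simp: nc_one_def)
lemma sh_one_right [simp]: "sh p nc_one = p"
  by (rule linear_nc_ext[where L="\<lambda>p. sh p nc_one" and M="\<lambda>p. p"]) (auto simp: nc_one_def)

lemma sh_rmulB_left: "sh (rmul p B) q = rmul (sh p q) B"
  by (rule nc_ext2[where L="\<lambda>p q. sh (rmul p B) q" and M="\<lambda>p q. rmul (sh p q) B"])
     ((intro linear_intros)?; simp add: shw_snocB_left)+
lemma sh_rmulB_right: "sh p (rmul q B) = rmul (sh p q) B"
  by (rule nc_ext2[where L="\<lambda>p q. sh p (rmul q B)" and M="\<lambda>p q. rmul (sh p q) B"])
     ((intro linear_intros)?; simp add: shw_snocB_right)+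
lemma sh_rmulAA: "sh (rmul p A) (rmul q A) = rmul (sh (rmul p A) q + sh p (rmul q A) + scal hbar (sh p q)) A"
  by (rule nc_ext2[where L="\<lambda>p q. sh (rmul p A) (rmul q A)"
        and M="\<lambda>p q. rmul (sh (rmul p A) q + sh p (rmul q A) + scal hbar (sh p q)) A"])
     ((intro linear_intros)?; simp add: shw_AA)+



section \<open>Trailing b's, the operator J\<close>

definition tb :: "letter list \<Rightarrow> nat" where
  "tb u = length (takeWhile (\<lambda>x. x = B) (rev u))"

lemma tb_Nil [simp]: "tb [] = 0" by (simp add: tb_def)
lemma tb_snocB [simp]: "tb (u @ [B]) = Suc (tb u)" by (simp add: tb_def)
lemma tb_snocA [simp]: "tb (u @ [A]) = 0" by (simp add: tb_def)
lemma takeWhile_rep: "length (takeWhile (\<lambda>x. x = B) (replicate i B @ ys)) = i + length (takeWhile (\<lambda>x. x = B) ys)"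
  by (induction i) auto
lemma tb_rep [simp]: "tb (u @ replicate i B) = tb u + i"
  by (simp add: tb_def takeWhile_rep)
lemma tb_append: "tb u = 0 \<Longrightarrow> tb (u @ v) = tb v"
proof (induction v rule: rev_induct)
  case (snoc x v) then show ?case by (cases x) (simp_all flip: append_assoc)
qed simp

definition strip :: "letter list \<Rightarrow> letter list" where
  "strip u = rev (dropWhile (\<lambda>x. x = B) (rev u))"

lemma strip_decomp: "u = strip u @ replicate (tb u) B"
proof -
  have "rev u = takeWhile (\<lambda>x. x = B) (rev u) @ dropWhile (\<lambda>x. x = B) (rev u)" by simp
  moreover have "takeWhile (\<lambda>x. x = B) (rev u) = replicate (tb u) B"
    unfolding tb_def by (metis (mono_tags) replicate_length_same set_takeWhileD)
  ultimately have "rev u = replicate (tb u) B @ rev (strip u)" by (simp add: strip_def)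
  then show ?thesis by (metis rev_append rev_replicate rev_rev_ident)
qed

lemma takeWhile_dropWhile_same: "takeWhile P (dropWhile P xs) = []"
  by (induction xs) auto

lemma tb_strip [simp]: "tb (strip u) = 0"
  unfolding tb_def strip_def by (simp add: takeWhile_dropWhile_same)

definition J :: "nc \<Rightarrow> nc" where
  "J p = lin (\<lambda>u. scal [: 1 / of_nat (tb u + 1) :] (word u)) p"

definition noBp :: "nc \<Rightarrow> bool" where
  "noBp p \<longleftrightarrow> (\<forall>u\<in>Poly_Mapping.keys p. tb u = 0)"

definition cmul :: "nc \<Rightarrow> nc" where
  "cmul X = rmul X A + scal hbar X"

definition rmulBs :: "nat \<Rightarrow> nc \<Rightarrow> nc" where
  "rmulBs i X = ncmult X (word (replicate i B))"

lemma linear_J_fun [simp]: "linear_nc J"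
  unfolding J_def by simp
lemma linear_J [intro]: "linear_nc L \<Longrightarrow> linear_nc (\<lambda>p. J (L p))"
  by (rule linear_nc_comp[OF linear_J_fun])
lemma linear_cmul [intro]: "linear_nc L \<Longrightarrow> linear_nc (\<lambda>p. cmul (L p))"
  unfolding cmul_def by (intro linear_intros)
lemma linear_rmulBs [intro]: "linear_nc L \<Longrightarrow> linear_nc (\<lambda>p. rmulBs i (L p))"
  unfolding rmulBs_def by (intro linear_intros)
lemmas linear_intros2 = linear_intros linear_J linear_cmul linear_rmulBs

lemma J_add: "J (p + q) = J p + J q" by (rule linear_nc_add[OF linear_J_fun])
lemma J_scal: "J (scal c p) = scal c (J p)" by (rule linear_nc_scal[OF linear_J_fun])
lemma J_zero [simp]: "J 0 = 0" by (rule linear_nc_zero[OF linear_J_fun])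
lemma J_sum: "J (sum f S) = (\<Sum>x\<in>S. J (f x))" by (rule linear_nc_sum[OF linear_J_fun])
lemma J_word: "J (word u) = scal [: 1 / of_nat (tb u + 1) :] (word u)"
  by (simp add: J_def)

lemma cmul_add: "cmul (p + q) = cmul p + cmul q"
  by (rule linear_nc_add[OF linear_cmul[OF linear_id]])
lemma cmul_scal: "cmul (scal c p) = scal c (cmul p)"
  by (rule linear_nc_scal[OF linear_cmul[OF linear_id]])
lemma cmul_diff: "cmul (p - q) = cmul p - cmul q"
  by (rule linear_nc_diff[OF linear_cmul[OF linear_id]])
lemma rmulBs_add: "rmulBs i (p + q) = rmulBs i p + rmulBs i q"
  by (rule linear_nc_add[OF linear_rmulBs[OF linear_id]])
lemma rmulBs_scal: "rmulBs i (scal c p) = scal c (rmulBs i p)"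
  by (rule linear_nc_scal[OF linear_rmulBs[OF linear_id]])
lemma rmulBs_sum: "rmulBs i (sum f S) = (\<Sum>x\<in>S. rmulBs i (f x))"
  by (rule linear_nc_sum[OF linear_rmulBs[OF linear_id]])

lemma rmulBs_0 [simp]: "rmulBs 0 X = X"
  by (simp add: rmulBs_def flip: nc_one_def)
lemma rmulBs_Suc: "rmulBs (Suc i) X = rmul (rmulBs i X) B"
  by (simp add: rmulBs_def rmul_def ncmult_assoc replicate_append_same[symmetric])
lemma rmulBs_word [simp]: "rmulBs i (word u) = word (u @ replicate i B)"
  by (simp add: rmulBs_def)
lemma rmulBs_lin: "rmulBs i X = lin (\<lambda>w. word (w @ replicate i B)) X"
  by (simp add: rmulBs_def ncmult_bil)

lemma noBp_word [simp]: "noBp (word u) \<longleftrightarrow> tb u = 0"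
  by (simp add: noBp_def word_def)
lemma noBp_zero [simp]: "noBp 0" by (simp add: noBp_def)
lemma noBp_one [simp]: "noBp nc_one" by (simp add: nc_one_def)
lemma noBp_add: "noBp p \<Longrightarrow> noBp q \<Longrightarrow> noBp (p + q)"
  unfolding noBp_def using keys_add[of p q] by blast
lemma noBp_scal: "noBp p \<Longrightarrow> noBp (scal c p)"
  unfolding noBp_def by (auto simp: in_keys_iff)
lemma noBp_sum: "(\<And>x. x \<in> S \<Longrightarrow> noBp (f x)) \<Longrightarrow> noBp (sum f S)"
  by (induction S rule: infinite_finite_induct) (auto intro: noBp_add)
lemma noBp_lin: "(\<And>u. u \<in> Poly_Mapping.keys p \<Longrightarrow> noBp (f u)) \<Longrightarrow> noBp (lin f p)"
  unfolding lin_def by (auto intro!: noBp_sum noBp_scal)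
lemma noBp_rmulA: "noBp (rmul p A)"
  unfolding rmul_def ncmult_bil by (auto intro!: noBp_lin)

lemma noBp_shw: "tb u = 0 \<Longrightarrow> tb v = 0 \<Longrightarrow> noBp (shw u v)"
proof (induction u v rule: shw.induct)
  case (1 u v)
  note hyps = 1
  from 1 have tu: "tb u = 0" and tv: "tb v = 0" by blast+
  show ?case
  proof (cases "u = [] \<or> v = []")
    case True then show ?thesis using 1 by auto
  next
    case False
    then obtain u' x v' y where u: "u = u' @ [x]" and v: "v = v' @ [y]"
      by (metis rev_exhaust)
    have "x = A" using tu u by (cases x) auto
    moreover have "y = A" using tv v by (cases y) auto
    ultimately show ?thesis using u v by (simp add: shw_AA noBp_rmulA)
  qed
qed

lemma noBp_sh: assumes "noBp p" "noBp q" shows "noBp (sh p q)"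
  unfolding sh_bil bil_def
proof (intro noBp_lin)
  fix u v assume "u \<in> Poly_Mapping.keys p" "v \<in> Poly_Mapping.keys q"
  then show "noBp (shw u v)" using assms by (intro noBp_shw) (auto simp: noBp_def)
qed

lemma J_noB: "noBp p \<Longrightarrow> J p = p"
proof -
  assume "noBp p"
  then have "J p = lin word p"
    unfolding J_def by (intro lin_cong) (simp add: noBp_def flip: one_pCons)
  then show ?thesis by simp
qed

lemma J_rmulBs: "noBp X \<Longrightarrow> J (rmulBs i X) = scal [: 1 / of_nat (i + 1) :] (rmulBs i X)"
proof -
  assume X: "noBp X"
  have "J (rmulBs i X) = lin (\<lambda>w. J (word (w @ replicate i B))) X"
    by (simp add: rmulBs_lin lin_linear_nc)
  also have "\<dots> = lin (\<lambda>w. scal [: 1 / of_nat (i + 1) :] (word (w @ replicate i B))) X"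
    using X by (intro lin_cong) (simp add: J_word noBp_def)
  also have "\<dots> = scal [: 1 / of_nat (i + 1) :] (rmulBs i X)"
    by (simp add: lin_fun_scal rmulBs_lin)
  finally show ?thesis .
qed

lemma shw_repB_left: "shw (u @ replicate i B) v = rmulBs i (shw u v)"
  by (induction i) (simp_all add: rmulBs_Suc shw_snocB_left flip: replicate_append_same append_assoc)
lemma shw_repB_right: "shw u (v @ replicate i B) = rmulBs i (shw u v)"
  by (induction i) (simp_all add: rmulBs_Suc shw_snocB_right flip: replicate_append_same append_assoc)
lemma sh_rmulBs_left: "sh (rmulBs i p) q = rmulBs i (sh p q)"
  by (induction i) (simp_all add: rmulBs_Suc sh_rmulB_left)
lemma sh_rmulBs_right: "sh p (rmulBs i q) = rmulBs i (sh p q)"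
  by (induction i) (simp_all add: rmulBs_Suc sh_rmulB_right)

lemma word_decomp: "word u = rmulBs (tb u) (word (strip u))"
  using strip_decomp[of u] by simp

lemma rmulBs_rmulBs: "rmulBs i (rmulBs j X) = rmulBs (i + j) X"
  by (simp add: rmulBs_def ncmult_assoc replicate_add[symmetric] add.commute)

lemma sh_word_decomp_left: "sh (word u) Q = rmulBs (tb u) (sh (word (strip u)) Q)"
  by (metis word_decomp sh_rmulBs_left)
lemma sh_word_decomp_right: "sh P (word v) = rmulBs (tb v) (sh P (word (strip v)))"
  by (metis word_decomp sh_rmulBs_right)

lemma J1a: assumes "noBp P" shows "J (sh P Q) = sh P (J Q)"
proof (rule linear_nc_ext[where L="\<lambda>Q. J (sh P Q)" and M="\<lambda>Q. sh P (J Q)"])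
  show "linear_nc (\<lambda>Q. J (sh P Q))" "linear_nc (\<lambda>Q. sh P (J Q))" by (intro linear_intros2)+
  fix v
  have "sh P (word v) = rmulBs (tb v) (sh P (word (strip v)))"
    by (rule sh_word_decomp_right)
  moreover have "noBp (sh P (word (strip v)))" using assms by (simp add: noBp_sh)
  ultimately show "J (sh P (word v)) = sh P (J (word v))"
    by (simp add: J_rmulBs J_word sh_scal_right)
qed

lemma J1b: assumes "noBp Q" shows "J (sh P Q) = sh (J P) Q"
proof (rule linear_nc_ext[where L="\<lambda>P. J (sh P Q)" and M="\<lambda>P. sh (J P) Q"])
  show "linear_nc (\<lambda>P. J (sh P Q))" "linear_nc (\<lambda>P. sh (J P) Q)" by (intro linear_intros2)+
  fix u
  have "sh (word u) Q = rmulBs (tb u) (sh (word (strip u)) Q)"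
    by (rule sh_word_decomp_left)
  moreover have "noBp (sh (word (strip u)) Q)" using assms by (simp add: noBp_sh)
  ultimately show "J (sh (word u) Q) = sh (J (word u)) Q"
    by (simp add: J_rmulBs J_word sh_scal_left)
qed

lemma pc_mult: "[:a::rat:] * [:b:] = [:a * b:]" by simp
lemma pc_add: "[:a::rat:] + [:b:] = [:a + b:]" by simp

lemma K_scalar: "[: 1 / of_nat (i + 1) :: rat :] * [: 1 / of_nat (j + 1) :] =
   ([: 1 / of_nat (i + 1) :] + [: 1 / of_nat (j + 1) :]) * [: 1 / of_nat (i + j + 1 + 1) :]"
proof -
  have h1: "(of_nat i + 1 :: rat) \<noteq> 0" "(of_nat j + 1 :: rat) \<noteq> 0" "(of_nat i + of_nat j + 2 :: rat) \<noteq> 0"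
    by (simp_all add: add_nonneg_eq_0_iff)
  have "(1 / of_nat (i + 1)) * (1 / of_nat (j + 1) :: rat) =
        (1 / of_nat (i + 1) + 1 / of_nat (j + 1)) * (1 / of_nat (i + j + 1 + 1))"
    using h1 by (simp add: field_simps)
  then show ?thesis by (simp only: pc_mult pc_add)
qed

lemma K: "rmul (sh (J P) (J Q)) B = J (rmul (sh (J P) Q + sh P (J Q)) B)"
proof (rule nc_ext2[where L="\<lambda>P Q. rmul (sh (J P) (J Q)) B" and M="\<lambda>P Q. J (rmul (sh (J P) Q + sh P (J Q)) B)"])
  show "\<And>Q. linear_nc (\<lambda>P. rmul (sh (J P) (J Q)) B)" "\<And>Q. linear_nc (\<lambda>P. J (rmul (sh (J P) Q + sh P (J Q)) B))"
    "\<And>P. linear_nc (\<lambda>Q. rmul (sh (J P) (J Q)) B)" "\<And>P. linear_nc (\<lambda>Q. J (rmul (sh (J P) Q + sh P (J Q)) B))"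
    by (intro linear_intros2)+
  fix u v
  let ?i = "tb u" and ?j = "tb v"
  let ?X = "shw (strip u) (strip v)"
  have X: "noBp ?X" by (simp add: noBp_shw)
  have uv: "sh (word u) (word v) = rmulBs (?i + ?j) ?X"
  proof -
    have "sh (word u) (word v) = rmulBs ?i (sh (word (strip u)) (word v))" by (rule sh_word_decomp_left)
    also have "sh (word (strip u)) (word v) = rmulBs ?j (sh (word (strip u)) (word (strip v)))"
      by (rule sh_word_decomp_right)
    finally show ?thesis by (simp only: rmulBs_rmulBs sh_word)
  qed
  have r: "rmul (rmulBs (?i + ?j) ?X) B = rmulBs (?i + ?j + 1) ?X"
    by (simp add: rmulBs_Suc)
  show "rmul (sh (J (word u)) (J (word v))) B = J (rmul (sh (J (word u)) (word v) + sh (word u) (J (word v))) B)"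
  proof -
    let ?a = "[: 1 / of_nat (?i + 1) :: rat :]" and ?b = "[: 1 / of_nat (?j + 1) :: rat :]"
    have L: "rmul (sh (J (word u)) (J (word v))) B = scal (?b * ?a) (rmulBs (?i + ?j + 1) ?X)"
      by (simp only: J_word sh_scal_left sh_scal_right uv rmul_scal r scal_scal)
    have R: "J (rmul (sh (J (word u)) (word v) + sh (word u) (J (word v))) B) =
        scal ((?a + ?b) * [: 1 / of_nat (?i + ?j + 1 + 1) :]) (rmulBs (?i + ?j + 1) ?X)"
      by (simp only: J_word sh_scal_left sh_scal_right uv rmul_scal r scal_scal
          scal_add_left[symmetric] rmul_add[symmetric] J_scal J_rmulBs[OF X])
    have sc: "?b * ?a = (?a + ?b) * [: 1 / of_nat (?i + ?j + 1 + 1) :]"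
      by (subst mult.commute) (rule K_scalar)
    show ?thesis by (simp only: L R sc)
  qed
qed

lemma J_ncmult: assumes "noBp X" shows "J (ncmult X Y) = ncmult X (J Y)"
proof (rule linear_nc_ext[where L="\<lambda>Y. J (ncmult X Y)" and M="\<lambda>Y. ncmult X (J Y)"])
  show "linear_nc (\<lambda>Y. J (ncmult X Y))" "linear_nc (\<lambda>Y. ncmult X (J Y))" by (intro linear_intros2)+
  fix v
  have "J (ncmult X (word v)) = lin (\<lambda>w. J (word (w @ v))) X"
    by (simp add: ncmult_bil lin_linear_nc)
  also have "\<dots> = lin (\<lambda>w. scal [: 1 / of_nat (tb v + 1) :] (word (w @ v))) X"
    using assms by (intro lin_cong) (simp add: J_word noBp_def tb_append)
  also have "\<dots> = scal [: 1 / of_nat (tb v + 1) :] (ncmult X (word v))"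
    by (simp add: lin_fun_scal ncmult_bil)
  also have "\<dots> = ncmult X (J (word v))"
    by (simp add: J_word ncmult_scal_right)
  finally show "J (ncmult X (word v)) = ncmult X (J (word v))" .
qed



section \<open>Rules for c = a + hbar\<close>

lemma R3: "sh (cmul X) (rmul Y A) = rmul (sh (cmul X) Y) A + cmul (sh X (rmul Y A))"
proof -
  have "sh (cmul X) (rmul Y A) = rmul (sh (rmul X A) Y) A + rmul (sh X (rmul Y A)) A
        + scal hbar (rmul (sh X Y) A) + scal hbar (sh X (rmul Y A))"
    by (simp only: cmul_def sh_add_left sh_scal_left sh_rmulAA rmul_add rmul_scal)
  moreover have "rmul (sh (cmul X) Y) A + cmul (sh X (rmul Y A)) = rmul (sh (rmul X A) Y) A
        + scal hbar (rmul (sh X Y) A) + (rmul (sh X (rmul Y A)) A + scal hbar (sh X (rmul Y A)))"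
    by (simp only: cmul_def sh_add_left sh_scal_left rmul_add rmul_scal)
  ultimately show ?thesis by (simp only: add_ac)
qed

lemma R3': "sh (rmul X A) (cmul Y) = cmul (sh (rmul X A) Y) + rmul (sh X (cmul Y)) A"
proof -
  have "sh (rmul X A) (cmul Y) = rmul (sh (rmul X A) Y) A + rmul (sh X (rmul Y A)) A
        + scal hbar (rmul (sh X Y) A) + scal hbar (sh (rmul X A) Y)"
    by (simp only: cmul_def sh_add_right sh_scal_right sh_rmulAA rmul_add rmul_scal)
  moreover have "cmul (sh (rmul X A) Y) + rmul (sh X (cmul Y)) A = rmul (sh (rmul X A) Y) A
        + scal hbar (sh (rmul X A) Y) + (rmul (sh X (rmul Y A)) A + scal hbar (rmul (sh X Y) A))"
    by (simp only: cmul_def sh_add_right sh_scal_right rmul_add rmul_scal)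
  ultimately show ?thesis by (simp only: add_ac)
qed

lemma R4: "sh (cmul X) (cmul Y) = cmul (sh (cmul X) Y + sh X (cmul Y) - scal hbar (sh X Y))"
proof -
  have Z: "sh (cmul X) Y + sh X (cmul Y) - scal hbar (sh X Y) =
      sh (rmul X A) Y + sh X (rmul Y A) + scal hbar (sh X Y)"
    by (simp add: cmul_def sh_add_left sh_add_right sh_scal_left sh_scal_right algebra_simps)
  have "sh (cmul X) (cmul Y) = rmul (sh (rmul X A) Y) A + rmul (sh X (rmul Y A)) A
        + scal hbar (rmul (sh X Y) A) + scal hbar (sh (rmul X A) Y) + scal hbar (sh X (rmul Y A))
        + scal (hbar * hbar) (sh X Y)"
    by (simp only: cmul_def sh_add_left sh_add_right sh_scal_left sh_scal_right sh_rmulAA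
        rmul_add rmul_scal scal_scal scal_add_right add_ac)
  moreover have "cmul (sh (rmul X A) Y + sh X (rmul Y A) + scal hbar (sh X Y)) =
        rmul (sh (rmul X A) Y) A + rmul (sh X (rmul Y A)) A
        + scal hbar (rmul (sh X Y) A) + scal hbar (sh (rmul X A) Y) + scal hbar (sh X (rmul Y A))
        + scal (hbar * hbar) (sh X Y)"
    by (simp only: cmul_def rmul_add rmul_scal scal_add_right scal_scal add_ac)
  ultimately show ?thesis by (simp only: Z)
qed

section \<open>The index shuffle and the map F\<close>

function qsh :: "letter list \<Rightarrow> letter list \<Rightarrow> nc" where
  "qsh u v =
    (if u = [] then word v
     else if v = [] then word u
     else rmul (qsh (butlast u) v) (last u) + rmul (qsh u (butlast v)) (last v)
          + (if last u = A \<and> last v = A then scal hbar (rmul (qsh (butlast u) (butlast v)) A) else 0))"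
  by pat_completeness auto
termination
  by (relation "measure (\<lambda>(u, v). length u + length v)") (auto simp: Suc_le_eq)

declare qsh.simps[simp del]

lemma qsh_Nil_left [simp]: "qsh [] v = word v"
  by (subst qsh.simps) simp
lemma qsh_Nil_right [simp]: "qsh u [] = word u"
  by (subst qsh.simps) simp
lemma qsh_snoc: "qsh (u @ [x]) (v @ [y]) = rmul (qsh u (v @ [y])) x + rmul (qsh (u @ [x]) v) y
    + (if x = A \<and> y = A then scal hbar (rmul (qsh u v) A) else 0)"
  by (subst qsh.simps) simp

fun Fr :: "letter list \<Rightarrow> nc" where
  "Fr [] = nc_one"
| "Fr (A # w) = rmul (Fr w) A"
| "Fr (B # w) = cmul (rmul (J (Fr w)) B)"

definition FF :: "letter list \<Rightarrow> nc" where "FF w = Fr (rev w)"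

lemma FF_Nil [simp]: "FF [] = nc_one" by (simp add: FF_def)
lemma FF_snocA: "FF (w @ [A]) = rmul (FF w) A" by (simp add: FF_def)
lemma FF_snocB: "FF (w @ [B]) = cmul (rmul (J (FF w)) B)" by (simp add: FF_def)

definition Flin :: "nc \<Rightarrow> nc" where "Flin P = lin FF P"

lemma linear_Flin [simp]: "linear_nc Flin"
proof -
  have e: "Flin = lin FF" by (rule ext) (simp add: Flin_def)
  show ?thesis unfolding e by (rule linear_nc_lin)
qed
lemma Flin_word [simp]: "Flin (word w) = FF w" by (simp add: Flin_def)
lemma Flin_add: "Flin (p + q) = Flin p + Flin q" by (rule linear_nc_add[OF linear_Flin])
lemma Flin_scal: "Flin (scal c p) = scal c (Flin p)" by (rule linear_nc_scal[OF linear_Flin])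
lemma Flin_zero [simp]: "Flin 0 = 0" by (rule linear_nc_zero[OF linear_Flin])

lemma Flin_rmulA: "Flin (rmul P A) = rmul (Flin P) A"
proof -
  have l1: "linear_nc (\<lambda>P. Flin (rmul P A))" by (rule linear_nc_comp[OF linear_Flin]) (intro linear_intros2)
  have l2: "linear_nc (\<lambda>P. rmul (Flin P) A)" by (rule linear_rmul[OF linear_Flin])
  show ?thesis by (rule linear_nc_ext[OF l1 l2]) (simp add: FF_snocA)
qed
lemma Flin_rmulB: "Flin (rmul P B) = cmul (rmul (J (Flin P)) B)"
proof -
  have l1: "linear_nc (\<lambda>P. Flin (rmul P B))" by (rule linear_nc_comp[OF linear_Flin]) (intro linear_intros2)
  have l2: "linear_nc (\<lambda>P. cmul (rmul (J (Flin P)) B))" by (intro linear_intros2 linear_Flin)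
  show ?thesis by (rule linear_nc_ext[OF l1 l2]) (simp add: FF_snocB)
qed

lemma noBp_FF_A: "noBp (FF (w @ [A]))" by (simp add: FF_snocA noBp_rmulA)

lemma BB_identity:
  fixes P Q :: nc
  defines "X \<equiv> rmul (J P) B" and "Y \<equiv> rmul (J Q) B"
  shows "sh (cmul X) Y + sh X (cmul Y) - scal hbar (sh X Y) =
         rmul (J (sh P (cmul Y)) + J (sh (cmul X) Q)) B"
proof -
  let ?W = "rmul (sh (J P) (J Q)) B"
  have e1: "sh (cmul X) Y = rmul (sh (rmul X A) (J Q) + scal hbar ?W) B"
    by (simp only: Y_def sh_rmulB_right cmul_def sh_add_left sh_scal_left X_def sh_rmulB_left rmul_add rmul_scal)
  have e2: "sh X (cmul Y) = rmul (sh (J P) (rmul Y A) + scal hbar ?W) B"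
    by (simp only: X_def sh_rmulB_left cmul_def sh_add_right sh_scal_right Y_def sh_rmulB_right rmul_add rmul_scal)
  have e3: "sh X Y = rmul ?W B"
    by (simp only: X_def Y_def sh_rmulB_left sh_rmulB_right)
  have e4: "J (sh P (cmul Y)) = sh (J P) (rmul Y A) + scal hbar (J (rmul (sh P (J Q)) B))"
    by (simp only: cmul_def sh_add_right sh_scal_right J_add J_scal J1b[OF noBp_rmulA]
        Y_def sh_rmulB_right)
  have e5: "J (sh (cmul X) Q) = sh (rmul X A) (J Q) + scal hbar (J (rmul (sh (J P) Q) B))"
    by (simp only: cmul_def sh_add_left sh_scal_left J_add J_scal J1a[OF noBp_rmulA]
        X_def sh_rmulB_left)
  have e6: "J (rmul (sh P (J Q)) B) + J (rmul (sh (J P) Q) B) = ?W"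
    by (simp only: K J_add[symmetric] rmul_add[symmetric] add.commute)
  have "rmul (J (sh P (cmul Y)) + J (sh (cmul X) Q)) B =
        rmul (sh (J P) (rmul Y A)) B + rmul (sh (rmul X A) (J Q)) B + scal hbar (rmul ?W B)"
    by (simp only: e4 e5 rmul_add rmul_scal add_ac scal_add_right[symmetric] e6)
  moreover have "sh (cmul X) Y + sh X (cmul Y) - scal hbar (sh X Y) =
        rmul (sh (J P) (rmul Y A)) B + rmul (sh (rmul X A) (J Q)) B + scal hbar (rmul ?W B)"
    by (simp add: e1 e2 e3 rmul_add rmul_scal algebra_simps)
  ultimately show ?thesis by simp
qed

theorem F_hom: "sh (FF u) (FF v) = Flin (qsh u v)"
proof (induction "length u + length v" arbitrary: u v rule: less_induct)
  case less
  show ?case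
  proof (cases "u = [] \<or> v = []")
    case True
    then show ?thesis by auto
  next
    case False
    then obtain u' x v' y where u: "u = u' @ [x]" and v: "v = v' @ [y]"
      by (metis rev_exhaust)
    have IH1: "sh (FF u') (FF v) = Flin (qsh u' v)" by (rule less) (simp add: u)
    have IH2: "sh (FF u) (FF v') = Flin (qsh u v')" by (rule less) (simp add: v)
    have IH3: "sh (FF u') (FF v') = Flin (qsh u' v')" by (rule less) (simp add: u v)
    have nu: "noBp (FF u)" if "x = A" using u that noBp_FF_A by simp
    have nv: "noBp (FF v)" if "y = A" using v that noBp_FF_A by simp
    show ?thesis
    proof (cases x; cases y)
      assume xy: "x = A" "y = A"
      have "sh (FF u) (FF v) = rmul (sh (FF u) (FF v') + sh (FF u') (FF v) + scal hbar (sh (FF u') (FF v'))) A"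
        by (simp only: u v xy FF_snocA sh_rmulAA)
      also have "\<dots> = rmul (Flin (qsh u v') + Flin (qsh u' v) + scal hbar (Flin (qsh u' v'))) A"
        by (simp only: IH1 IH2 IH3)
      also have "\<dots> = Flin (qsh u v)"
        by (simp add: u v xy qsh_snoc Flin_add Flin_scal Flin_rmulA rmul_add rmul_scal add_ac)
      finally show ?thesis .
    next
      assume xy: "x = A" "y = B"
      have "sh (FF u) (FF v) = cmul (sh (FF u) (rmul (J (FF v')) B)) + rmul (sh (FF u') (FF v)) A"
        by (simp only: u v xy FF_snocA FF_snocB R3')
      also have "\<dots> = cmul (rmul (J (Flin (qsh u v'))) B) + rmul (Flin (qsh u' v)) A"
        using J1a[OF nu[OF xy(1)], symmetric] by (simp only: sh_rmulB_right IH1 IH2)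
      also have "\<dots> = Flin (qsh u v)"
        by (simp add: u v xy qsh_snoc Flin_add Flin_rmulA Flin_rmulB add_ac)
      finally show ?thesis .
    next
      assume xy: "x = B" "y = A"
      have "sh (FF u) (FF v) = rmul (sh (FF u) (FF v')) A + cmul (sh (rmul (J (FF u')) B) (FF v))"
        by (simp only: u v xy FF_snocA FF_snocB R3)
      also have "\<dots> = rmul (Flin (qsh u v')) A + cmul (rmul (J (Flin (qsh u' v))) B)"
        using J1b[OF nv[OF xy(2)], symmetric] by (simp only: sh_rmulB_left IH1 IH2)
      also have "\<dots> = Flin (qsh u v)"
        by (simp add: u v xy qsh_snoc Flin_add Flin_rmulA Flin_rmulB add_ac)
      finally show ?thesis .
    next
      assume xy: "x = B" "y = B"
      have "sh (FF u) (FF v) = cmul (rmul (J (sh (FF u') (FF v)) + J (sh (FF u) (FF v'))) B)"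
        by (simp only: u v xy FF_snocB R4 BB_identity)
      also have "\<dots> = cmul (rmul (J (Flin (qsh u' v)) + J (Flin (qsh u v'))) B)"
        by (simp only: IH1 IH2)
      also have "\<dots> = Flin (qsh u v)"
        by (simp add: u v xy qsh_snoc Flin_add Flin_rmulB J_add rmul_add cmul_add)
      finally show ?thesis .
    qed
  qed
qed



lemma term_id:
  assumes "j \<le> s - i" "i \<le> s"
  shows "fact j * fact (s - j) * ((s - i) choose j) = fact (s - i) * fact i * ((s - j) choose i :: nat)"
proof -
  have a: "fact j * fact (s - i - j) * ((s - i) choose j) = (fact (s - i) :: nat)"
    by (rule binomial_fact_lemma) (use assms in simp)
  have b: "fact i * fact (s - j - i) * ((s - j) choose i) = (fact (s - j) :: nat)"
    by (rule binomial_fact_lemma) (use assms in simp)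
  have c: "s - j - i = s - i - j" by simp
  have "fact j * fact (s - j) * ((s - i) choose j) * fact (s - i - j) =
        fact (s - i) * fact i * ((s - j) choose i) * (fact (s - i - j) :: nat)"
  proof -
    have "fact j * fact (s - j) * ((s - i) choose j) * fact (s - i - j) =
          (fact j * fact (s - i - j) * ((s - i) choose j)) * (fact (s - j) :: nat)"
      by (simp only: ac_simps)
    also have "\<dots> = fact (s - i) * fact (s - j)" by (simp only: a)
    also have "\<dots> = fact (s - i) * (fact i * fact (s - j - i) * ((s - j) choose i))" by (simp only: b)
    also have "\<dots> = fact (s - i) * fact i * ((s - j) choose i) * (fact (s - i - j) :: nat)"
      by (simp only: c ac_simps)
    finally show ?thesis .
  qed
  then show ?thesis by (rule mult_right_cancel[OF fact_nonzero, THEN iffD1])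
qed

lemma hockey: "i \<le> s \<Longrightarrow> (\<Sum>j\<le>s - i. (s - j) choose i) = Suc s choose Suc i"
proof -
  assume "i \<le> s"
  have "(\<Sum>j\<le>s - i. (s - j) choose i) = (\<Sum>k\<in>{i..s}. k choose i)"
  proof (rule sum.reindex_bij_witness[where i="\<lambda>k. s - k" and j="\<lambda>j. s - j"])
  qed (use \<open>i \<le> s\<close> in auto)
  also have "\<dots> = (\<Sum>k\<le>s. k choose i)"
    by (rule sum.mono_neutral_left) auto
  also have "\<dots> = Suc s choose Suc i" by (rule sum_choose_upper)
  finally show ?thesis .
qed

lemma comb_id:
  assumes "i \<le> s"
  shows "(i + 1) * (\<Sum>j\<le>s - i. fact j * fact (s - j) * ((s - i) choose j)) = (fact (s + 1) :: nat)"
proof -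
  have "(\<Sum>j\<le>s - i. fact j * fact (s - j) * ((s - i) choose j)) =
        (\<Sum>j\<le>s - i. fact (s - i) * fact i * ((s - j) choose i) :: nat)"
    by (rule sum.cong) (use assms term_id in auto)
  also have "\<dots> = fact (s - i) * fact i * (Suc s choose Suc i)"
    by (simp only: sum_distrib_left[symmetric] hockey[OF assms])
  finally have "(i + 1) * (\<Sum>j\<le>s - i. fact j * fact (s - j) * ((s - i) choose j)) =
     fact (Suc i) * fact (Suc s - Suc i) * (Suc s choose Suc i)"
    by (simp add: algebra_simps)
  also have "\<dots> = fact (Suc s)" by (rule binomial_fact_lemma) (use assms in simp)
  finally show ?thesis by simp
qed

lemma triangle_swap:
  fixes f :: "nat \<Rightarrow> nat \<Rightarrow> 'a::comm_monoid_add"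
  shows "(\<Sum>j\<le>s. \<Sum>i\<le>s - j. f j i) = (\<Sum>i\<le>s. \<Sum>j\<le>s - i. f j i)"
proof -
  have *: "(\<Sum>i\<le>s - j. h i) = (\<Sum>i\<le>s. if i + j \<le> s then h i else 0)" if "j \<le> s" for j and h :: "nat \<Rightarrow> 'a"
  proof -
    have eq: "{..s - j} = {i \<in> {..s}. i + j \<le> s}" using that by auto
    have "(\<Sum>i\<le>s - j. h i) = sum h {i \<in> {..s}. i + j \<le> s}" by (simp only: eq)
    also have "\<dots> = (\<Sum>i\<le>s. if i + j \<le> s then h i else 0)" by (rule sum.inter_filter) simp
    finally show ?thesis .
  qed
  have "(\<Sum>j\<le>s. \<Sum>i\<le>s - j. f j i) = (\<Sum>j\<le>s. \<Sum>i\<le>s. if i + j \<le> s then f j i else 0)"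
    by (rule sum.cong) (simp_all add: *)
  also have "\<dots> = (\<Sum>i\<le>s. \<Sum>j\<le>s. if i + j \<le> s then f j i else 0)"
    by (rule sum.swap)
  also have "\<dots> = (\<Sum>i\<le>s. \<Sum>j\<le>s - i. f j i)"
    by (rule sum.cong) (simp_all add: * add.commute)
  finally show ?thesis .
qed



lemma ncmult_c: "ncmult X (word [A] + scal hbar nc_one) = cmul X"
  by (simp add: cmul_def ncmult_add_right ncmult_scal_right rmul_def)

lemma rep_snoc: "replicate (Suc n) x = replicate n x @ [x]"
  by (simp add: replicate_append_same)

section \<open>Projection killing trailing b's\<close>

definition P0 :: "nc \<Rightarrow> nc" where
  "P0 p = lin (\<lambda>u. if tb u = 0 then word u else 0) p"

lemma linear_P0_fun [simp]: "linear_nc P0"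
proof -
  have e: "P0 = lin (\<lambda>u. if tb u = 0 then word u else 0)" by (rule ext) (simp add: P0_def)
  show ?thesis unfolding e by (rule linear_nc_lin)
qed
lemma linear_P0 [intro]: "linear_nc L \<Longrightarrow> linear_nc (\<lambda>p. P0 (L p))"
  by (rule linear_nc_comp[OF linear_P0_fun])
lemma P0_add: "P0 (p + q) = P0 p + P0 q" by (rule linear_nc_add[OF linear_P0_fun])
lemma P0_scal: "P0 (scal c p) = scal c (P0 p)" by (rule linear_nc_scal[OF linear_P0_fun])
lemma P0_word: "P0 (word u) = (if tb u = 0 then word u else 0)" by (simp add: P0_def)

lemma P0_noB: "noBp p \<Longrightarrow> P0 p = p"
proof -
  assume "noBp p"
  then have "P0 p = lin word p"
    unfolding P0_def by (intro lin_cong) (simp add: noBp_def)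
  then show ?thesis by simp
qed

lemma noBp_P0: "noBp (P0 p)"
  unfolding P0_def by (intro noBp_lin) simp

lemma P0_rmulBs: assumes "0 < i" shows "P0 (rmulBs i X) = 0"
proof -
  have "P0 (rmulBs i X) = lin (\<lambda>w. P0 (word (w @ replicate i B))) X"
    by (simp add: rmulBs_lin lin_linear_nc)
  also have "\<dots> = lin (\<lambda>w. 0) X"
    using assms by (intro lin_cong) (simp add: P0_word)
  finally show ?thesis by simp
qed

lemma P0_rmulB: "P0 (rmul X B) = 0"
  using P0_rmulBs[of 1 X] by (simp add: rmulBs_Suc)

lemma P0_hom: "P0 (sh P Q) = sh (P0 P) (P0 Q)"
proof (rule nc_ext2[where L="\<lambda>P Q. P0 (sh P Q)" and M="\<lambda>P Q. sh (P0 P) (P0 Q)"])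
  show "\<And>Q. linear_nc (\<lambda>P. P0 (sh P Q))" "\<And>Q. linear_nc (\<lambda>P. sh (P0 P) (P0 Q))"
    "\<And>P. linear_nc (\<lambda>Q. P0 (sh P Q))" "\<And>P. linear_nc (\<lambda>Q. sh (P0 P) (P0 Q))"
    by (intro linear_intros2 linear_P0)+
  fix u v
  show "P0 (sh (word u) (word v)) = sh (P0 (word u)) (P0 (word v))"
  proof (cases "tb u = 0")
    case u0: True
    show ?thesis
    proof (cases "tb v = 0")
      case True
      then show ?thesis using u0 by (simp add: P0_word P0_noB noBp_shw)
    next
      case False
      then show ?thesis
        by (simp only: sh_word_decomp_right[of "word u" v] P0_rmulBs P0_word) simp
    qed
  next
    case False
    then show ?thesis
      by (simp only: sh_word_decomp_left[of u "word v"] P0_rmulBs P0_word) simp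
  qed
qed

section \<open>Powers of b\<close>

definition Fn :: "nat \<Rightarrow> nc" where "Fn n = FF (replicate n B)"
definition G :: "nat \<Rightarrow> nc" where "G n = P0 (Fn n)"

lemma Fn_0 [simp]: "Fn 0 = nc_one" by (simp add: Fn_def)
lemma G_0 [simp]: "G 0 = nc_one" by (simp add: G_def P0_noB)
lemma Fn_Suc: "Fn (Suc n) = cmul (rmul (J (Fn n)) B)"
  by (simp add: Fn_def FF_snocB flip: replicate_append_same)
lemma noBp_G: "noBp (G n)" by (simp add: G_def noBp_P0)

lemma e1_eq: "e 1 = Fn 1"
proof -
  have "J nc_one = nc_one" by (simp add: J_noB)
  then show ?thesis
    by (simp add: e_def Fn_Suc ncmult_c flip: nc_one_def) (simp add: nc_one_def)
qed

lemma g1_eq: "g 1 = G 1"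
proof -
  have "G 1 = P0 (cmul (word [B]))"
    using e1_eq by (simp add: G_def e_def ncmult_c flip: nc_one_def)
  also have "\<dots> = word [B, A]"
    by (simp add: cmul_def P0_add P0_scal P0_noB noBp_rmulA P0_word tb_def)
  finally show ?thesis by (simp add: g_def)
qed

lemma qsh_reps: "qsh (replicate j B) (replicate l B) = scal (of_nat ((j + l) choose j)) (word (replicate (j + l) B))"
proof (induction j arbitrary: l)
  case 0 then show ?case by simp
next
  case (Suc j)
  note outer = Suc.IH
  show ?case
  proof (induction l)
    case 0 then show ?case by simp
  next
    case (Suc l)
    have "qsh (replicate (Suc j) B) (replicate (Suc l) B) =
          rmul (qsh (replicate j B) (replicate (Suc l) B)) B + rmul (qsh (replicate (Suc j) B) (replicate l B)) B"
      by (simp only: rep_snoc qsh_snoc) simp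
    also have "\<dots> = scal (of_nat ((j + Suc l) choose j) + of_nat ((Suc j + l) choose Suc j)) (word (replicate (Suc j + Suc l) B))"
      by (simp only: outer Suc.IH rmul_scal rmul_word rep_snoc[symmetric]) (simp add: scal_add_left)
    also have "of_nat ((j + Suc l) choose j) + of_nat ((Suc j + l) choose Suc j) = (of_nat ((Suc j + Suc l) choose Suc j) :: rat poly)"
      by (simp flip: of_nat_add)
    finally show ?case .
  qed
qed

lemma Fn_sh: "sh (Fn j) (Fn l) = scal (of_nat ((j + l) choose j)) (Fn (j + l))"
  by (simp add: Fn_def F_hom qsh_reps Flin_scal)

lemma G_sh: "sh (G j) (G l) = scal (of_nat ((j + l) choose j)) (G (j + l))"
  by (simp add: G_def P0_hom[symmetric] Fn_sh P0_scal)

lemma shpow_e: "shpow (e 1) n = scal (of_nat (fact n)) (Fn n)"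
proof (induction n)
  case 0 then show ?case by simp
next
  case (Suc n)
  have "shpow (e 1) (Suc n) = scal (of_nat (fact n)) (sh (Fn 1) (Fn n))"
    by (simp only: shpow.simps Suc) (simp only: e1_eq sh_scal_right)
  also have "\<dots> = scal (of_nat (fact (Suc n))) (Fn (Suc n))"
    by (simp add: Fn_sh scal_scal algebra_simps)
  finally show ?case .
qed

lemma shpow_g: "shpow (g 1) n = scal (of_nat (fact n)) (G n)"
proof (induction n)
  case 0 then show ?case by simp
next
  case (Suc n)
  have "shpow (g 1) (Suc n) = scal (of_nat (fact n)) (sh (G 1) (G n))"
    by (simp only: shpow.simps Suc) (simp only: g1_eq sh_scal_right)
  also have "\<dots> = scal (of_nat (fact (Suc n))) (G (Suc n))"
    by (simp add: G_sh scal_scal algebra_simps)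
  finally show ?case .
qed



definition hc :: "nat \<Rightarrow> rat poly" where
  "hc i = [: 1 / of_nat (fact i) :] * hbar ^ i"

lemma hc_0 [simp]: "hc 0 = 1" by (simp add: hc_def)

lemma hc_Suc: "hbar * (hc i * [: 1 / of_nat (i + 1) :]) = hc (Suc i)"
proof -
  have "(1 / of_nat (fact i) :: rat) * (1 / of_nat (i + 1)) = 1 / of_nat (fact (Suc i))"
    by (simp add: field_simps)
  then have "[: 1 / of_nat (fact i) :: rat :] * [: 1 / of_nat (i + 1) :] = [: 1 / of_nat (fact (Suc i)) :]"
    by (simp only: pc_mult)
  then show ?thesis
    unfolding hc_def by (simp only: power_Suc mult_ac)
qed

lemma J_expand:
  "J (\<Sum>i\<le>n. scal (hc i) (rmulBs i (G (n - i)))) = (\<Sum>i\<le>n. scal (hc i * [: 1 / of_nat (i + 1) :]) (rmulBs i (G (n - i))))"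
  by (simp add: J_sum J_scal J_rmulBs noBp_G scal_scal)

lemma Fn_expand: "Fn n = (\<Sum>i\<le>n. scal (hc i) (rmulBs i (G (n - i))))"
proof (induction n)
  case 0 then show ?case by simp
next
  case (Suc n)
  have G: "G (Suc n) = rmul (rmul (J (Fn n)) B) A"
    by (simp add: G_def Fn_Suc cmul_def P0_add P0_scal P0_rmulB P0_noB noBp_rmulA)
  have "Fn (Suc n) = G (Suc n) + scal hbar (rmul (J (Fn n)) B)"
    by (simp add: G Fn_Suc cmul_def)
  also have "scal hbar (rmul (J (Fn n)) B) = (\<Sum>i\<le>n. scal (hc (Suc i)) (rmulBs (Suc i) (G (Suc n - Suc i))))"
    by (simp only: Suc J_expand rmul_sum rmul_scal scal_sum_right scal_scal rmulBs_Suc[symmetric] hc_Suc diff_Suc_Suc)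
  also have "G (Suc n) + \<dots> = (\<Sum>i\<le>Suc n. scal (hc i) (rmulBs i (G (Suc n - i))))"
    by (simp only: sum.atMost_Suc_shift) simp
  finally show ?case .
qed

lemma J_Fn: "J (Fn n) = (\<Sum>i\<le>n. scal (hc i * [: 1 / of_nat (i + 1) :]) (rmulBs i (G (n - i))))"
  by (simp only: Fn_expand J_expand)

lemma step1:
  assumes "j \<le> s"
  shows "sh (shpow (g 1) j) (shpow (e 1) (s - j)) =
     (\<Sum>i\<le>s - j. scal (of_nat (fact j * fact (s - j) * ((s - i) choose j)) * hc i) (rmulBs i (G (s - i))))"
proof -
  have a: "sh (shpow (g 1) j) (shpow (e 1) (s - j)) = scal (of_nat (fact j) * of_nat (fact (s - j))) (sh (G j) (Fn (s - j)))"
    by (simp only: shpow_g shpow_e sh_scal_left sh_scal_right scal_scal ac_simps)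
  have b: "sh (G j) (Fn (s - j)) = (\<Sum>i\<le>s - j. scal (hc i) (rmulBs i (sh (G j) (G (s - j - i)))))"
    by (simp only: Fn_expand sh_sum_right sh_scal_right sh_rmulBs_right)
  have "sh (shpow (g 1) j) (shpow (e 1) (s - j)) = scal (of_nat (fact j) * of_nat (fact (s - j)))
     (\<Sum>i\<le>s - j. scal (hc i) (rmulBs i (sh (G j) (G (s - j - i)))))"
    by (simp only: a b)
  also have "\<dots> = (\<Sum>i\<le>s - j. scal (of_nat (fact j * fact (s - j) * ((s - i) choose j)) * hc i) (rmulBs i (G (s - i))))"
    unfolding scal_sum_right
  proof (rule sum.cong[OF refl])
    fix i assume "i \<in> {..s - j}"
    then have i: "j + (s - j - i) = s - i" using assms by auto
    show "scal (of_nat (fact j) * of_nat (fact (s - j))) (scal (hc i) (rmulBs i (sh (G j) (G (s - j - i))))) =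
          scal (of_nat (fact j * fact (s - j) * ((s - i) choose j)) * hc i) (rmulBs i (G (s - i)))"
      by (simp only: G_sh i rmulBs_scal scal_scal) (simp add: ac_simps)
  qed
  finally show ?thesis .
qed

lemma coef_id:
  assumes "i \<le> s"
  shows "(\<Sum>j\<le>s - i. [: 1 / of_nat (fact (s + 1)) :] * (of_nat (fact j * fact (s - j) * ((s - i) choose j)) * hc i))
         = hc i * [: 1 / of_nat (i + 1) :]"
proof -
  define N where "N = (\<Sum>j\<le>s - i. fact j * fact (s - j) * ((s - i) choose j) :: nat)"
  have NN: "(i + 1) * N = fact (s + 1)" unfolding N_def by (rule comb_id[OF assms])
  have r: "(1 / of_nat (fact (s + 1)) :: rat) * of_nat N = 1 / of_nat (i + 1)"
  proof -
    have "(of_nat (fact (s + 1)) :: rat) = of_nat (i + 1) * of_nat N"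
      by (simp only: NN[symmetric] of_nat_mult)
    moreover have "N \<noteq> 0" using NN fact_nonzero[of "s + 1"] by (metis mult_0_right)
    then have "(of_nat (i + 1) :: rat) * of_nat N \<noteq> 0" by simp
    ultimately show ?thesis by (simp add: field_simps)
  qed
  have "(\<Sum>j\<le>s - i. [: 1 / of_nat (fact (s + 1)) :] * (of_nat (fact j * fact (s - j) * ((s - i) choose j)) * hc i))
     = [: 1 / of_nat (fact (s + 1)) :] * (of_nat N * hc i)"
    by (simp only: N_def sum_distrib_left[symmetric] sum_distrib_right[symmetric] of_nat_sum)
  also have "\<dots> = [: 1 / of_nat (fact (s + 1)) * of_nat N :] * hc i"
    by (simp only: of_nat_poly mult.assoc[symmetric] pc_mult)
  also have "\<dots> = [: 1 / of_nat (i + 1) :] * hc i"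
    by (simp only: r)
  also have "\<dots> = hc i * [: 1 / of_nat (i + 1) :]"
    by (rule mult.commute)
  finally show ?thesis .
qed

theorem E1_eq: "E1 s = J (Fn s)"
proof -
  let ?T = "\<lambda>i. rmulBs i (G (s - i))"
  let ?c = "\<lambda>j i. [: 1 / of_nat (fact (s + 1)) :] * (of_nat (fact j * fact (s - j) * ((s - i) choose j)) * hc i)"
  have "E1 s = scal [: 1 / of_nat (fact (s + 1)) :]
     (\<Sum>j\<le>s. \<Sum>i\<le>s - j. scal (of_nat (fact j * fact (s - j) * ((s - i) choose j)) * hc i) (?T i))"
    unfolding E1_def by (rule arg_cong[where f="scal _"], rule sum.cong[OF refl], rule step1, simp)
  also have "\<dots> = (\<Sum>j\<le>s. \<Sum>i\<le>s - j. scal (?c j i) (?T i))"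
    by (simp only: scal_sum_right scal_scal)
  also have "\<dots> = (\<Sum>i\<le>s. \<Sum>j\<le>s - i. scal (?c j i) (?T i))"
    by (rule triangle_swap)
  also have "\<dots> = (\<Sum>i\<le>s. scal (\<Sum>j\<le>s - i. ?c j i) (?T i))"
    by (simp only: scal_sum_left)
  also have "\<dots> = (\<Sum>i\<le>s. scal (hc i * [: 1 / of_nat (i + 1) :]) (?T i))"
    by (rule sum.cong[OF refl]) (simp only: coef_id atMost_iff)
  also have "\<dots> = J (Fn s)" by (simp only: J_Fn)
  finally show ?thesis .
qed



section \<open>Encoding indices as words\<close>

fun enc :: "nat list \<Rightarrow> letter list" where
  "enc [] = []"
| "enc (k # ks) = (B # replicate (k - 1) A) @ enc ks"

definition st :: "letter list \<Rightarrow> bool" where "st w \<longleftrightarrow> w = [] \<or> hd w = B"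
definition en :: "letter list \<Rightarrow> bool" where "en w \<longleftrightarrow> w = [] \<or> last w = A"

lemma FF_append: assumes "noBp (FF W)" shows "FF (W @ V) = ncmult (FF W) (FF V)"
proof (induction V rule: rev_induct)
  case Nil then show ?case by (simp add: nc_one_def[symmetric])
next
  case (snoc x V)
  show ?case
  proof (cases x)
    case A
    then show ?thesis
      by (simp only: append_assoc[symmetric] FF_snocA snoc rmul_ncmult)
  next
    case B
    have c: "cmul (ncmult X Y) = ncmult X (cmul Y)" for X Y
      by (simp only: ncmult_c[symmetric] ncmult_assoc)
    show ?thesis
      by (simp only: B append_assoc[symmetric] FF_snocB snoc J_ncmult[OF assms] rmul_ncmult c)
  qed
qed

lemma FF_repA: "FF (X @ replicate n A) = ncmult (FF X) (word (replicate n A))"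
proof (induction n)
  case 0 then show ?case by (simp add: nc_one_def[symmetric])
next
  case (Suc n)
  show ?case
    by (simp only: rep_snoc append_assoc[symmetric] FF_snocA Suc rmul_ncmult rmul_word)
qed

lemma noBp_FF_en: "en w \<Longrightarrow> noBp (FF w)"
  unfolding en_def by (metis FF_Nil append_butlast_last_id noBp_FF_A noBp_one)

lemma Eaux_eq: "is_index ks \<Longrightarrow> Eaux s ks = J (FF (replicate s B @ enc ks))"
proof (induction ks arbitrary: s)
  case Nil
  then show ?case by (simp add: E1_eq Fn_def)
next
  case (Cons k ks)
  have k: "0 < k" and ks: "is_index ks" using Cons.prems by (auto simp: is_index_def)
  show ?case
  proof (cases "k = 1")
    case True
    then show ?thesis using Cons.IH[OF ks, of "Suc s"] by (simp add: replicate_app_Cons_same)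
  next
    case False
    then have k2: "k - 1 = Suc (k - 2)" using k by simp
    let ?W = "replicate s B @ B # replicate (k - 1) A"
    have nW: "noBp (FF ?W)"
      by (simp only: k2 rep_snoc append_Cons[symmetric] append_assoc[symmetric] noBp_FF_A)
    have FW: "FF ?W = ncmult (E1 s) (e k)"
    proof -
      have Weq: "?W = replicate (Suc s) B @ replicate (k - 1) A" by (simp add: replicate_app_Cons_same)
      have "FF ?W = ncmult (FF (replicate (Suc s) B)) (word (replicate (k - 1) A))"
        by (simp only: Weq FF_repA)
      also have "\<dots> = ncmult (cmul (rmul (E1 s) B)) (word (replicate (k - 1) A))"
        by (simp only: Fn_def[symmetric] Fn_Suc E1_eq)
      also have "\<dots> = ncmult (E1 s) (e k)"
        by (simp only: e_def ncmult_c[symmetric] rmul_def ncmult_assoc)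
      finally show ?thesis .
    qed
    have "J (FF (replicate s B @ enc (k # ks))) = J (FF (?W @ enc ks))" by simp
    also have "\<dots> = ncmult (FF ?W) (J (FF (enc ks)))"
      by (simp only: FF_append[OF nW] J_ncmult[OF nW])
    also have "\<dots> = ncmult (ncmult (E1 s) (e k)) (Eaux 0 ks)"
      by (simp only: FW Cons.IH[OF ks, of 0] replicate_0 append_Nil)
    finally show ?thesis using False by simp
  qed
qed

lemma Eidx_eq: "is_index ks \<Longrightarrow> Eidx ks = J (FF (enc ks))"
  by (simp add: Eidx_def Eaux_eq)

lemma enc_st: "st (enc ks)"
  by (cases ks) (auto simp: st_def)

lemma enc_Nil_iff: "is_index ks \<Longrightarrow> enc ks = [] \<longleftrightarrow> ks = []"
  by (cases ks) auto

lemma enc_en: "admissible ks \<Longrightarrow> en (enc ks)"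
proof (induction ks)
  case Nil then show ?case by (simp add: en_def)
next
  case (Cons k ks)
  show ?case
  proof (cases "ks = []")
    case True
    then have "2 \<le> k" using Cons.prems by (simp add: admissible_def)
    then have "replicate (k - 1) A \<noteq> []" by simp
    then show ?thesis using True by (simp add: en_def)
  next
    case False
    then have "admissible ks" using Cons.prems by (simp add: admissible_def is_index_def)
    then have "en (enc ks)" by (rule Cons.IH)
    moreover have "enc ks \<noteq> []" using False \<open>admissible ks\<close> enc_Nil_iff by (auto simp: admissible_def)
    ultimately show ?thesis by (simp add: en_def)
  qed
qed

lemma dec_exists: "st w \<Longrightarrow> \<exists>ks. is_index ks \<and> enc ks = w \<and> (en w \<longrightarrow> admissible ks)"
proof (induction "length w" arbitrary: w rule: less_induct)
  case less
  show ?case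
  proof (cases w)
    case Nil then show ?thesis by (intro exI[of _ "[]"]) (simp add: is_index_def admissible_def)
  next
    case (Cons x rest)
    then have x: "x = B" using less.prems by (simp add: st_def)
    define a where "a = takeWhile (\<lambda>y. y = A) rest"
    define r where "r = dropWhile (\<lambda>y. y = A) rest"
    have rest: "rest = a @ r" by (simp add: a_def r_def)
    have a: "a = replicate (length a) A"
      unfolding a_def by (metis (mono_tags) replicate_length_same set_takeWhileD)
    have str: "st r"
    proof (cases r)
      case (Cons y ys)
      then have "y \<noteq> A" using hd_dropWhile[of "\<lambda>y. y = A" rest] unfolding r_def by auto
      then show ?thesis using Cons by (cases y) (auto simp: st_def)
    qed (simp add: st_def)
    have "length r < length w" using Cons rest by simp
    then obtain ks where ks: "is_index ks" "enc ks = r" "en r \<longrightarrow> admissible ks"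
      using less.hyps str by blast
    let ?k = "Suc (length a) # ks"
    have idx: "is_index ?k" using ks(1) by (simp add: is_index_def)
    have enck: "enc ?k = w" using Cons x rest a ks(2) by simp
    have adm: "admissible ?k" if "en w"
    proof (cases "ks = []")
      case True
      then have "r = []" using ks(2) by simp
      then have "a \<noteq> []" using that Cons x rest by (auto simp: en_def)
      then have "0 < length a" by simp
      then show ?thesis using True idx by (simp add: admissible_def Suc_le_eq)
    next
      case False
      then have "r \<noteq> []" using ks enc_Nil_iff by auto
      then have "en r" using that Cons rest by (simp add: en_def)
      then have "admissible ks" using ks(3) by simp
      then show ?thesis using False idx by (simp add: admissible_def)
    qed
    show ?thesis using idx enck adm by blast
  qed
qed

lemma keys_rmul: "Poly_Mapping.keys (rmul P x) \<subseteq> (\<lambda>w. w @ [x]) ` Poly_Mapping.keys P"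
proof -
  have "rmul P x = (\<Sum>u\<in>Poly_Mapping.keys P. Poly_Mapping.single (u @ [x]) (Poly_Mapping.lookup P u))"
    by (simp add: rmul_def ncmult_bil lin_def scal_word)
  then show ?thesis using keys_sum[of "\<lambda>u. Poly_Mapping.single (u @ [x]) (Poly_Mapping.lookup P u)" "Poly_Mapping.keys P"]
    by (auto split: if_splits)
qed

lemma keys_scal_sub: "Poly_Mapping.keys (scal c P) \<subseteq> Poly_Mapping.keys P"
  by (auto simp: in_keys_iff)

lemma qsh_keys:
  "w \<in> Poly_Mapping.keys (qsh u v) \<Longrightarrow> length u \<le> length w \<and> length v \<le> length w
     \<and> (st u \<longrightarrow> st v \<longrightarrow> st w) \<and> (en u \<longrightarrow> en v \<longrightarrow> en w)"
proof (induction u v arbitrary: w rule: qsh.induct)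
  case (1 u v)
  show ?case
  proof (cases "u = [] \<or> v = []")
    case True
    then show ?thesis using "1.prems" by (auto simp: word_def st_def en_def)
  next
    case False
    then obtain u' x v' y where u: "u = u' @ [x]" and v: "v = v' @ [y]" by (metis rev_exhaust)
    have q: "qsh u v = rmul (qsh u' v) x + rmul (qsh u v') y
        + (if x = A \<and> y = A then scal hbar (rmul (qsh u' v') A) else 0)"
      using u v by (simp add: qsh_snoc)
    have IH1: "\<And>w. w \<in> Poly_Mapping.keys (qsh u' v) \<Longrightarrow> length u' \<le> length w \<and> length v \<le> length w
        \<and> (st u' \<longrightarrow> st v \<longrightarrow> st w) \<and> (en u' \<longrightarrow> en v \<longrightarrow> en w)"
      using "1.IH"(1) False u by auto
    have IH2: "\<And>w. w \<in> Poly_Mapping.keys (qsh u v') \<Longrightarrow> length u \<le> length w \<and> length v' \<le> length w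
        \<and> (st u \<longrightarrow> st v' \<longrightarrow> st w) \<and> (en u \<longrightarrow> en v' \<longrightarrow> en w)"
      using "1.IH"(2) False v by auto
    have IH3: "\<And>w. x = A \<Longrightarrow> y = A \<Longrightarrow> w \<in> Poly_Mapping.keys (qsh u' v') \<Longrightarrow> length u' \<le> length w \<and> length v' \<le> length w
        \<and> (st u' \<longrightarrow> st v' \<longrightarrow> st w) \<and> (en u' \<longrightarrow> en v' \<longrightarrow> en w)"
      using "1.IH"(3) False u v by auto
    have stu: "st u \<Longrightarrow> st u'" using u by (cases u') (auto simp: st_def)
    have stv: "st v \<Longrightarrow> st v'" using v by (cases v') (auto simp: st_def)
    have sts: "st (w0 @ [z])" if "st w0" "w0 \<noteq> []" for w0 z using that by (cases w0) (auto simp: st_def)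
    have enu: "en u \<Longrightarrow> x = A" using u by (simp add: en_def)
    have env: "en v \<Longrightarrow> y = A" using v by (simp add: en_def)
    have "w \<in> Poly_Mapping.keys (rmul (qsh u' v) x) \<or> w \<in> Poly_Mapping.keys (rmul (qsh u v') y)
          \<or> (x = A \<and> y = A \<and> w \<in> Poly_Mapping.keys (rmul (qsh u' v') A))"
    proof -
      let ?X1 = "rmul (qsh u' v) x" and ?X2 = "rmul (qsh u v') y"
        and ?X3 = "(if x = A \<and> y = A then scal hbar (rmul (qsh u' v') A) else 0)"
      have "w \<in> Poly_Mapping.keys (?X1 + ?X2 + ?X3)" using "1.prems" q by simp
      then have "w \<in> Poly_Mapping.keys ?X1 \<or> w \<in> Poly_Mapping.keys ?X2 \<or> w \<in> Poly_Mapping.keys ?X3"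
        using keys_add[of "?X1 + ?X2" ?X3] keys_add[of ?X1 ?X2] by blast
      moreover have "w \<in> Poly_Mapping.keys ?X3 \<Longrightarrow> x = A \<and> y = A \<and> w \<in> Poly_Mapping.keys (rmul (qsh u' v') A)"
        using keys_scal_sub by (cases "x = A \<and> y = A") auto
      ultimately show ?thesis by blast
    qed
    then show ?thesis
    proof (elim disjE conjE)
      assume "w \<in> Poly_Mapping.keys (rmul (qsh u' v) x)"
      then obtain w0 where w: "w = w0 @ [x]" and w0: "w0 \<in> Poly_Mapping.keys (qsh u' v)" using keys_rmul by blast
      have "w0 \<noteq> []" using IH1[OF w0] v by auto
      then show ?thesis using IH1[OF w0] w u stu sts enu by (auto simp: en_def)
    next
      assume "w \<in> Poly_Mapping.keys (rmul (qsh u v') y)"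
      then obtain w0 where w: "w = w0 @ [y]" and w0: "w0 \<in> Poly_Mapping.keys (qsh u v')" using keys_rmul by blast
      have "w0 \<noteq> []" using IH2[OF w0] u by auto
      then show ?thesis using IH2[OF w0] w v stv sts env by (auto simp: en_def)
    next
      assume xy: "x = A" "y = A" and "w \<in> Poly_Mapping.keys (rmul (qsh u' v') A)"
      then obtain w0 where w: "w = w0 @ [A]" and w0: "w0 \<in> Poly_Mapping.keys (qsh u' v')" using keys_rmul by blast
      have "st w" if "st u" "st v"
      proof -
        have "u' \<noteq> []" using that(1) u xy by (auto simp: st_def)
        then have "w0 \<noteq> []" using IH3[OF xy w0] by auto
        then show ?thesis using IH3[OF xy w0] stu stv sts w that by auto
      qed
      then show ?thesis using IH3[OF xy w0] w u v by (auto simp: en_def)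
    qed
  qed
qed

lemma span_lemma:
  assumes "\<And>w. w \<in> Poly_Mapping.keys P \<Longrightarrow> \<exists>ks. S ks \<and> is_index ks \<and> enc ks = w"
  shows "lin (\<lambda>w. J (FF w)) P \<in> E_span {ks. S ks}"
proof -
  define d where "d w = (SOME ks. S ks \<and> is_index ks \<and> enc ks = w)" for w
  have d: "S (d w) \<and> is_index (d w) \<and> enc (d w) = w" if "w \<in> Poly_Mapping.keys P" for w
    unfolding d_def using someI_ex[OF assms[OF that]] .
  have inj: "inj_on d (Poly_Mapping.keys P)"
    by (rule inj_on_inverseI[where g=enc]) (use d in blast)
  let ?F = "d ` Poly_Mapping.keys P"
  let ?c = "\<lambda>ks. Poly_Mapping.lookup P (enc ks)"
  have "(\<Sum>ks\<in>?F. scal (?c ks) (Eidx ks)) = (\<Sum>w\<in>Poly_Mapping.keys P. scal (?c (d w)) (Eidx (d w)))"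
    by (rule sum.reindex[OF inj, unfolded comp_def])
  also have "\<dots> = lin (\<lambda>w. J (FF w)) P"
    unfolding lin_def by (rule sum.cong[OF refl]) (use d Eidx_eq in simp)
  finally have eq: "lin (\<lambda>w. J (FF w)) P = (\<Sum>ks\<in>?F. scal (?c ks) (Eidx ks))" by simp
  have sub: "?F \<subseteq> {ks. S ks}" using d by auto
  have fin: "finite ?F" by simp
  show ?thesis unfolding E_span_def mem_Collect_eq
    by (rule exI[of _ ?F], rule exI[of _ ?c]) (use eq sub fin in simp)
qed

theorem proposition6p4:
  fixes k l :: "nat list"
  assumes "is_index k" and "is_index l"
  shows "((admissible k \<or> admissible l) \<longrightarrow> sh (Eidx k) (Eidx l) \<in> frak_e)
       \<and> ((admissible k \<and> admissible l) \<longrightarrow> sh (Eidx k) (Eidx l) \<in> frak_e0)"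
proof -
  let ?P = "qsh (enc k) (enc l)"
  have Flin_lin: "J (Flin P) = lin (\<lambda>w. J (FF w)) P" for P
    by (simp add: Flin_def lin_linear_nc)
  have main: "sh (Eidx k) (Eidx l) = lin (\<lambda>w. J (FF w)) ?P" if "admissible k \<or> admissible l"
  proof -
    have "sh (Eidx k) (Eidx l) = J (Flin ?P)"
    proof (cases "admissible k")
      case True
      then have n: "noBp (FF (enc k))" by (simp add: enc_en noBp_FF_en)
      have "sh (Eidx k) (Eidx l) = sh (FF (enc k)) (J (FF (enc l)))"
        using assms by (simp add: Eidx_eq J_noB[OF n])
      also have "\<dots> = J (Flin ?P)" by (simp only: J1a[OF n, symmetric] F_hom)
      finally show ?thesis .
    next
      case False
      then have "admissible l" using that by blast
      then have n: "noBp (FF (enc l))" by (simp add: enc_en noBp_FF_en)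
      have "sh (Eidx k) (Eidx l) = sh (J (FF (enc k))) (FF (enc l))"
        using assms by (simp add: Eidx_eq J_noB[OF n])
      also have "\<dots> = J (Flin ?P)" by (simp only: J1b[OF n, symmetric] F_hom)
      finally show ?thesis .
    qed
    then show ?thesis by (simp only: Flin_lin)
  qed
  have part1: "sh (Eidx k) (Eidx l) \<in> frak_e" if "admissible k \<or> admissible l"
  proof -
    have "lin (\<lambda>w. J (FF w)) ?P \<in> E_span {ks. is_index ks}"
    proof (rule span_lemma)
      fix w assume "w \<in> Poly_Mapping.keys ?P"
      then have "st w" using qsh_keys enc_st by blast
      then show "\<exists>ks. is_index ks \<and> is_index ks \<and> enc ks = w" using dec_exists by blast
    qed
    then show ?thesis using main[OF that] by (simp add: frak_e_def)
  qed
  have part2: "sh (Eidx k) (Eidx l) \<in> frak_e0" if "admissible k" "admissible l"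
  proof -
    have "lin (\<lambda>w. J (FF w)) ?P \<in> E_span {ks. admissible ks}"
    proof (rule span_lemma)
      fix w assume w: "w \<in> Poly_Mapping.keys ?P"
      then have "st w" using qsh_keys enc_st by blast
      moreover have "en w" using w qsh_keys enc_en that by blast
      ultimately show "\<exists>ks. admissible ks \<and> is_index ks \<and> enc ks = w" using dec_exists by blast
    qed
    then show ?thesis using main that by (simp add: frak_e0_def)
  qed
  show ?thesis using part1 part2 by blast
qed


end
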